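(* Let $p,q>1$ and $t>2$, and let $u,v$ be weights on $\mathbb{R}$. Suppose that for every interval $I=(a,b)$, with $l_{I}=b-a$, \[ \left(\frac{1}{l_{I}/t}\int_{a}^{a+\frac{l_{I}}{t}}v^{q}\right)^{\frac{1}{q}}\left(\frac{1}{l_{I}/t}\int_{b-\frac{l_{I}}{t}}^{b}u^{-p'}\right)^{\frac{1}{p'}}\leq K. \] Then \[ \sup_{a<b<c}\left(\frac{v^{q}(a,b)}{c-a}\right)^{\frac{1}{q}}\left(\frac{u^{-p'}(b,c)}{c-a}\right)^{\frac{1}{p'}}\leq K. \]
   Context: A weight is a non-negative locally integrable function on $\mathbb{R}$. For a weight $\sigma$ and an interval $(a,b)$, $\sigma(a,b)=\int_{a}^{b}\sigma$; in particular $v^{q}(a,b)=\int_a^b v^q$ and $u^{-p'}(b,c)=\int_b^c u^{-p'}$. Here $p'=p/(p-1)$. *)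

theory Defs
  imports "HOL-Analysis.Analysis"
begin

definition weight :: "(real \<Rightarrow> real) \<Rightarrow> bool" where
  "weight w \<longleftrightarrow> (\<forall>x. 0 \<le> w x) \<and> (\<forall>a b. w integrable_on {a..b})"

definition conj_exp :: "real \<Rightarrow> real" where
  "conj_exp p = p / (p - 1)"

definition wmeas :: "(real \<Rightarrow> real) \<Rightarrow> real \<Rightarrow> real \<Rightarrow> real" where
  "wmeas w a b = integral {a..b} w"

end

theory Submission
  imports Defs
begin

lemma split_lower:
  fixes w :: "real \<Rightarrow> real"
  assumes nn: "\<And>x. 0 \<le> w x" and int: "\<And>x y. w integrable_on {x..y}"
    and "l \<le> b" and "0 \<le> h"
  shows "integral {l+h..b} w \<ge> integral {l..b} w - integral {l..l+h} w"
proof (cases "l + h \<le> b")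
  case True
  have "integral {l..b} w = integral {l..l+h} w + integral {l+h..b} w"
    using Henstock_Kurzweil_Integration.integral_combine[of l "l+h" b w] True assms int by simp
  then show ?thesis by simp
next
  case False
  have "integral {l..b} w \<le> integral {l..l+h} w"
    by (rule integral_subset_le) (use False int nn in auto)
  moreover have "integral {l+h..b} w = 0" using False by simp
  ultimately show ?thesis by simp
qed

lemma split_upper:
  fixes w :: "real \<Rightarrow> real"
  assumes nn: "\<And>x. 0 \<le> w x" and int: "\<And>x y. w integrable_on {x..y}"
    and "b \<le> R" and "0 \<le> h"
  shows "integral {b..R-h} w \<ge> integral {b..R} w - integral {R-h..R} w"
proof (cases "b \<le> R - h")
  case True
  have "integral {b..R} w = integral {b..R-h} w + integral {R-h..R} w"
    using Henstock_Kurzweil_Integration.integral_combine[of b "R-h" R w] True assms int by simp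
  then show ?thesis by simp
next
  case False
  have "integral {b..R} w \<le> integral {R-h..R} w"
    by (rule integral_subset_le) (use False int nn in auto)
  moreover have "integral {b..R-h} w = 0" using False by simp
  ultimately show ?thesis by simp
qed

lemma core:
  fixes w1 w2 :: "real \<Rightarrow> real" and s r t K a b c :: real
  assumes nn1: "\<And>x. 0 \<le> w1 x" and int1: "\<And>x y. w1 integrable_on {x..y}"
    and nn2: "\<And>x. 0 \<le> w2 x" and int2: "\<And>x y. w2 integrable_on {x..y}"
    and t: "t > 1" and s: "s > 0" and r: "r > 0"
    and hyp: "\<forall>l R. l < R \<longrightarrow>
      (integral {l..l + (R - l) / t} w1 / ((R - l) / t)) powr s *
      (integral {R - (R - l) / t..R} w2 / ((R - l) / t)) powr r \<le> K"
    and abc: "a < b" "b < c"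
  shows "(integral {a..b} w1 / (c - a)) powr s * (integral {b..c} w2 / (c - a)) powr r \<le> K"
proof -
  define V where "V x y = integral {x..y} w1" for x y
  define U where "U x y = integral {x..y} w2" for x y
  define \<alpha> where "\<alpha> = V a b / (c - a)"
  define \<beta> where "\<beta> = U b c / (c - a)"
  have Vnn: "0 \<le> V x y" for x y unfolding V_def by (rule integral_nonneg) (use int1 nn1 in auto)
  have Unn: "0 \<le> U x y" for x y unfolding U_def by (rule integral_nonneg) (use int2 nn2 in auto)
  have K0: "0 \<le> K" using order_trans[OF mult_nonneg_nonneg[OF powr_ge_zero powr_ge_zero] hyp[rule_format, of 0 1]] by simp
  have a0: "\<alpha> \<ge> 0" "\<beta> \<ge> 0" using Vnn Unn abc by (auto simp: \<alpha>_def \<beta>_def)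
  show ?thesis
  proof (cases "\<alpha> = 0 \<or> \<beta> = 0")
    case True
    then show ?thesis using K0 by (auto simp: \<alpha>_def \<beta>_def V_def U_def)
  next
    case False
    with a0 have ap: "\<alpha> > 0" and bp: "\<beta> > 0" by auto
    show ?thesis
    proof (rule ccontr)
      assume "\<not> ?thesis"
      hence big: "K < \<alpha> powr s * \<beta> powr r" by (simp add: \<alpha>_def \<beta>_def V_def U_def)
      have nogood: "\<not> (\<alpha> * ((R - l) / t) \<le> V l (l + (R - l) / t) \<and> \<beta> * ((R - l) / t) \<le> U (R - (R - l) / t) R)"
        if "l < R" for l R
      proof
        assume g: "\<alpha> * ((R - l) / t) \<le> V l (l + (R - l) / t) \<and> \<beta> * ((R - l) / t) \<le> U (R - (R - l) / t) R"
        have hp: "(R - l) / t > 0" using that t by simp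
        have "\<alpha> \<le> V l (l + (R - l) / t) / ((R - l) / t)" using g by (subst pos_le_divide_eq[OF hp]) simp
        moreover have "\<beta> \<le> U (R - (R - l) / t) R / ((R - l) / t)" using g by (subst pos_le_divide_eq[OF hp]) simp
        ultimately have "\<alpha> powr s * \<beta> powr r \<le> (V l (l + (R - l) / t) / ((R - l) / t)) powr s * (U (R - (R - l) / t) R / ((R - l) / t)) powr r"
          using a0 s r by (intro mult_mono powr_mono2) auto
        also have "\<dots> \<le> K" using hyp that by (simp add: V_def U_def)
        finally show False using big by simp
      qed
      define step where "step z = (let l = fst z; R = snd z; h = (R - l) / t in
          if V l (l + h) < \<alpha> * h then (l + h, R) else (l, R - h))" for z :: "real \<times> real"
      define D1 where "D1 z = V (fst z) b - \<alpha> * (snd z - fst z)" for z :: "real \<times> real"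
      define D2 where "D2 z = U b (snd z) - \<beta> * (snd z - fst z)" for z :: "real \<times> real"
      define \<rho> where "\<rho> = 1 - 1 / t"
      have stepP: "D1 (step z) \<ge> D1 z \<and> D2 (step z) \<ge> D2 z \<and> D1 (step z) + D2 (step z) > D1 z + D2 z
          \<and> snd (step z) - fst (step z) = \<rho> * (snd z - fst z)"
        if lR: "fst z < snd z" and d1: "D1 z \<ge> 0" and d2: "D2 z \<ge> 0" for z
      proof -
        obtain l R where z: "z = (l, R)" by (cases z)
        define h where "h = (R - l) / t"
        have hp: "h > 0" using lR t by (simp add: z h_def)
        have lb: "l \<le> b"
        proof (rule ccontr)
          assume "\<not> l \<le> b" hence "V l b = 0" by (simp add: V_def)
          thus False using d1 ap lR by (simp add: D1_def z) (smt (verit) mult_pos_pos)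
        qed
        have bR: "b \<le> R"
        proof (rule ccontr)
          assume "\<not> b \<le> R" hence "U b R = 0" by (simp add: U_def)
          thus False using d2 bp lR by (simp add: D2_def z) (smt (verit) mult_pos_pos)
        qed
        have rh: "R - l - h = \<rho> * (R - l)" by (simp add: h_def \<rho>_def algebra_simps diff_divide_distrib)
        show ?thesis
        proof (cases "V l (l + h) < \<alpha> * h")
          case True
          hence st: "step z = (l + h, R)" by (simp add: step_def z h_def Let_def)
          have "V (l + h) b \<ge> V l b - V l (l + h)"
            unfolding V_def by (rule split_lower) (use nn1 int1 lb hp in auto)
          then show ?thesis using True st rh mult_pos_pos[OF bp hp] by (simp add: D1_def D2_def z algebra_simps)
        next
          case False
          hence st: "step z = (l, R - h)" by (simp add: step_def z h_def Let_def)
          have "\<beta> * h > U (R - h) R" using nogood[of l R] False lR by (auto simp: z h_def)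
          moreover have "U b (R - h) \<ge> U b R - U (R - h) R"
            unfolding U_def by (rule split_upper) (use nn2 int2 bR hp in auto)
          ultimately show ?thesis using st rh mult_pos_pos[OF ap hp] by (simp add: D1_def D2_def z algebra_simps)
        qed
      qed
      define Z where "Z n = (step ^^ n) (a, c)" for n
      have Z0: "D1 (Z 0) = 0" "D2 (Z 0) = 0" using abc by (simp_all add: Z_def D1_def D2_def \<alpha>_def \<beta>_def)
      have inv: "D1 (Z n) \<ge> 0 \<and> D2 (Z n) \<ge> 0 \<and> snd (Z n) - fst (Z n) = \<rho> ^ n * (c - a)" for n
      proof (induction n)
        case 0 then show ?case using Z0 by (simp add: Z_def)
      next
        case (Suc n)
        have rp: "\<rho> > 0" using t by (simp add: \<rho>_def)
        have i1: "D1 (Z n) \<ge> 0" and i2: "D2 (Z n) \<ge> 0" and i3: "snd (Z n) - fst (Z n) = \<rho> ^ n * (c - a)"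
          using Suc.IH by auto
        have "\<rho> ^ n * (c - a) > 0" using rp abc by simp
        hence lt: "fst (Z n) < snd (Z n)" using i3 by linarith
        have e: "Z (Suc n) = step (Z n)" by (simp add: Z_def)
        have st: "D1 (step (Z n)) \<ge> D1 (Z n)" "D2 (step (Z n)) \<ge> D2 (Z n)"
          "snd (step (Z n)) - fst (step (Z n)) = \<rho> * (snd (Z n) - fst (Z n))"
          using stepP[OF lt i1 i2] by auto
        show ?case unfolding e using st i1 i2 i3 by simp
      qed
      have strict: "D1 (Z (Suc n)) + D2 (Z (Suc n)) > D1 (Z n) + D2 (Z n)" for n
      proof -
        have rp: "\<rho> > 0" using t by (simp add: \<rho>_def)
        have i1: "D1 (Z n) \<ge> 0" and i2: "D2 (Z n) \<ge> 0" and i3: "snd (Z n) - fst (Z n) = \<rho> ^ n * (c - a)"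
          using inv[of n] by auto
        have "\<rho> ^ n * (c - a) > 0" using rp abc by simp
        hence lt: "fst (Z n) < snd (Z n)" using i3 by linarith
        have e: "Z (Suc n) = step (Z n)" by (simp add: Z_def)
        show ?thesis using stepP[OF lt i1 i2] unfolding e by simp
      qed
      define S1 where "S1 = D1 (Z 1) + D2 (Z 1)"
      have S1p: "S1 > 0" using strict[of 0] Z0 by (simp add: S1_def)
      have Sge: "D1 (Z n) + D2 (Z n) \<ge> S1" if "n \<ge> 1" for n
        using that
      proof (induction n rule: dec_induct)
        case base then show ?case by (simp add: S1_def)
      next
        case (step n) then show ?case using strict[of n] by linarith
      qed
      define \<delta> where "\<delta> n = \<rho> ^ n * (c - a)" for n
      have rp: "0 < \<rho>" "\<rho> < 1" using t by (auto simp: \<rho>_def)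
      have dlim: "\<delta> \<longlonglongrightarrow> 0"
        unfolding \<delta>_def using LIMSEQ_power_zero[of \<rho>] rp by (auto intro: tendsto_mult_left_zero)
      have bound: "D1 (Z n) + D2 (Z n) \<le> V (b - \<delta> n) b + U b (b + \<delta> n)" for n
      proof -
        obtain l R where z: "Z n = (l, R)" by (cases "Z n")
        have i1: "D1 (Z n) \<ge> 0" and i2: "D2 (Z n) \<ge> 0" and i3: "R - l = \<delta> n"
          using inv[of n] by (auto simp: z \<delta>_def)
        have dp: "\<delta> n > 0" using rp abc by (simp add: \<delta>_def)
        have lb: "l \<le> b"
        proof (rule ccontr)
          assume "\<not> l \<le> b" hence "V l b = 0" by (simp add: V_def)
          thus False using i1 ap i3 dp by (simp add: D1_def z) (smt (verit) mult_pos_pos)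
        qed
        have bR: "b \<le> R"
        proof (rule ccontr)
          assume "\<not> b \<le> R" hence "U b R = 0" by (simp add: U_def)
          thus False using i2 bp i3 dp by (simp add: D2_def z) (smt (verit) mult_pos_pos)
        qed
        have "V l b \<le> V (b - \<delta> n) b" unfolding V_def
          by (rule integral_subset_le) (use int1 nn1 lb bR i3 in auto)
        moreover have "U b R \<le> U b (b + \<delta> n)" unfolding U_def
          by (rule integral_subset_le) (use int2 nn2 lb bR i3 in auto)
        moreover have "\<alpha> * (R - l) \<ge> 0" "\<beta> * (R - l) \<ge> 0" using ap bp dp i3 by auto
        ultimately show ?thesis by (simp add: D1_def D2_def z)
      qed
      have c1: "continuous_on {a..b} (\<lambda>x. V x b)" unfolding V_def
        by (rule indefinite_integral_continuous_1') (rule int1)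
      have c2: "continuous_on {b..c} (\<lambda>x. U b x)" unfolding U_def
        by (rule indefinite_integral_continuous_1) (rule int2)
      have l1: "(\<lambda>n. b - \<delta> n) \<longlonglongrightarrow> b" using tendsto_diff[OF tendsto_const dlim, of b] by simp
      have l2: "(\<lambda>n. b + \<delta> n) \<longlonglongrightarrow> b" using tendsto_add[OF tendsto_const dlim, of b] by simp
      have dpos: "\<delta> n > 0" for n using rp abc by (simp add: \<delta>_def)
      have ev1: "eventually (\<lambda>n. \<delta> n < b - a) sequentially"
        using order_tendstoD(2)[OF dlim, of "b - a"] abc by simp
      have ev2: "eventually (\<lambda>n. \<delta> n < c - b) sequentially"
        using order_tendstoD(2)[OF dlim, of "c - b"] abc by simp
      have m1: "(\<lambda>n. V (b - \<delta> n) b) \<longlonglongrightarrow> V b b"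
        by (rule continuous_on_tendsto_compose[OF c1 l1]) (use abc dpos less_imp_le[OF dpos] in \<open>auto intro!: eventually_mono[OF ev1]\<close>)
      have m2: "(\<lambda>n. U b (b + \<delta> n)) \<longlonglongrightarrow> U b b"
        by (rule continuous_on_tendsto_compose[OF c2 l2]) (use abc dpos less_imp_le[OF dpos] in \<open>auto intro!: eventually_mono[OF ev2]\<close>)
      have "(\<lambda>n. V (b - \<delta> n) b + U b (b + \<delta> n)) \<longlonglongrightarrow> 0"
        using tendsto_add[OF m1 m2] by (simp add: V_def U_def o_def)
      hence "eventually (\<lambda>n. V (b - \<delta> n) b + U b (b + \<delta> n) < S1) sequentially"
        using S1p by (rule order_tendstoD(2))
      moreover have "eventually (\<lambda>n. n \<ge> 1) sequentially" by (rule eventually_ge_at_top)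
      ultimately obtain n where "V (b - \<delta> n) b + U b (b + \<delta> n) < S1" "n \<ge> 1"
        by (metis (mono_tags, lifting) eventually_sequentially order_refl max.cobounded1 max.cobounded2)
      then show False using Sge[of n] bound[of n] by linarith
    qed
  qed
qed

theorem lemma2p6:
  fixes p q t K :: real and u v :: "real \<Rightarrow> real"
  assumes "p > 1" and "q > 1" and "t > 2"
    and "weight u" and "weight v"
    and "\<forall>x. u x > 0"
    and "weight (\<lambda>x. v x powr q)"
    and "weight (\<lambda>x. u x powr (- conj_exp p))"
    and hyp: "\<forall>a b. a < b \<longrightarrow>
      (wmeas (\<lambda>x. v x powr q) a (a + (b - a) / t) / ((b - a) / t)) powr (1 / q) *
      (wmeas (\<lambda>x. u x powr (- conj_exp p)) (b - (b - a) / t) b / ((b - a) / t)) powr (1 / conj_exp p)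
      \<le> K"
  shows "\<forall>a b c. a < b \<and> b < c \<longrightarrow>
      (wmeas (\<lambda>x. v x powr q) a b / (c - a)) powr (1 / q) *
      (wmeas (\<lambda>x. u x powr (- conj_exp p)) b c / (c - a)) powr (1 / conj_exp p) \<le> K"
proof (intro allI impI)
  fix a b c :: real
  assume abc: "a < b \<and> b < c"
  have cp: "conj_exp p > 0" using assms(1) by (simp add: conj_exp_def)
  from assms(7) have w1: "\<And>x. 0 \<le> v x powr q" "\<And>x y. (\<lambda>x. v x powr q) integrable_on {x..y}"
    by (auto simp: weight_def)
  from assms(8) have w2: "\<And>x. 0 \<le> u x powr (- conj_exp p)" "\<And>x y. (\<lambda>x. u x powr (- conj_exp p)) integrable_on {x..y}"
    by (auto simp: weight_def)
  show "(wmeas (\<lambda>x. v x powr q) a b / (c - a)) powr (1 / q) *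
      (wmeas (\<lambda>x. u x powr (- conj_exp p)) b c / (c - a)) powr (1 / conj_exp p) \<le> K"
    unfolding wmeas_def
    by (rule core[OF w1 w2]) (use assms(2,3) cp hyp abc in \<open>auto simp: wmeas_def\<close>)
qed

end
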